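(* Consider the mining game with $N\ge 2$ miners, costs-per-hash $0<c_1\le\dots\le c_N$, reward $R>0$ and capacity parameter $\gamma\ge0$, let $h^*$ be its unique equilibrium hash rate profile, $n$ the number of active miners, and $\pi_i^*$ the equilibrium payoff of miner $i$. Then $(\pi_i^* )_{1\le i\le N}$ is a decreasing sequence with $\pi_i^*>0$ for $1\le i\le n$ and $\pi_i^*=0$ for $n<i\le N$. Moreover, the profit-per-hash of active miners, $(\pi_i^*/h_i^* )_{1\le i\le n}$, is a decreasing sequence.
   Context: Mining game: $N\ge2$ miners with costs-per-hash $0<c_1\le\dots\le c_N$; each miner $i$ chooses $h_i\ge0$, $H=\sum_j h_j$, and the payoff of miner $i$ is $\pi_i=\frac{h_i}{H}R-c_ih_i-\frac{\gamma}{2}h_i^2$ if $H>0$, and $\pi_i=0$ if $H=0$, where $R>0$ and $\gamma\ge 0$. An equilibrium hash rate profile is a pure-strategy Nash equilibrium $h^*\in[0,\infty)^N$; it exists and is unique, and $\pi_i^*$ denotes miner $i$'s payoff at $h^*$. Miner $i$ is active if $h_i^*>0$. A sequence $(x_i)$ is called decreasing if $x_i\ge x_{i+1}$ for all $i$. *)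

theory Defs
  imports Main "HOL.Real"
begin

text \<open>Miners are indexed by 1..N; a hash rate profile is h :: nat => real
  (only the values on 1..N matter). Total hash rate H = sum of h over 1..N.\<close>

definition total_hash :: "nat \<Rightarrow> (nat \<Rightarrow> real) \<Rightarrow> real" where
  "total_hash N h = (\<Sum>j\<in>{1..N}. h j)"

definition payoff :: "real \<Rightarrow> real \<Rightarrow> (nat \<Rightarrow> real) \<Rightarrow> nat \<Rightarrow> (nat \<Rightarrow> real) \<Rightarrow> nat \<Rightarrow> real" where
  "payoff R \<gamma> c N h i =
     (if total_hash N h > 0
      then h i / total_hash N h * R - c i * h i - \<gamma> / 2 * (h i)^2
      else 0)"

definition is_equilibrium :: "real \<Rightarrow> real \<Rightarrow> (nat \<Rightarrow> real) \<Rightarrow> nat \<Rightarrow> (nat \<Rightarrow> real) \<Rightarrow> bool" where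
  "is_equilibrium R \<gamma> c N h \<longleftrightarrow>
     (\<forall>i\<in>{1..N}. 0 \<le> h i) \<and>
     (\<forall>i\<in>{1..N}. \<forall>x::real. 0 \<le> x \<longrightarrow> payoff R \<gamma> c N (h(i := x)) i \<le> payoff R \<gamma> c N h i)"

definition num_active :: "nat \<Rightarrow> (nat \<Rightarrow> real) \<Rightarrow> nat" where
  "num_active N h = card {i\<in>{1..N}. 0 < h i}"

end

theory Submission
  imports Defs Complex_Main
begin

lemma br:
  fixes S c R \<gamma> y :: real
  defines "g \<equiv> \<lambda>x. (if S + x > 0 then x/(S+x)*R - c*x - \<gamma>/2*x^2 else 0)"
  assumes S0: "S \<ge> 0" and c0: "c > 0" and R0: "R > 0" and gam: "\<gamma> \<ge> 0" and y0: "y \<ge> 0"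
    and opt: "\<forall>x\<ge>0. g x \<le> g y"
  shows "S > 0 \<and> (y > 0 \<longrightarrow> y*(\<gamma> + R/(S+y)^2) = R/(S+y) - c) \<and> (y = 0 \<longrightarrow> R/S \<le> c)"
proof -
  have Spos: "S > 0"
  proof (rule ccontr)
    assume "\<not> S > 0" hence S: "S = 0" using S0 by simp
    show False
    proof (cases "y = 0")
      case True
      define x where "x = min 1 (R/(4*(c+\<gamma>+1)))"
      have x0: "x > 0" using R0 c0 gam by (simp add: x_def)
      have x1: "x \<le> 1" by (simp add: x_def)
      have "x \<le> R/(4*(c+\<gamma>+1))" by (simp add: x_def)
      hence xb: "x*(4*(c+\<gamma>+1)) \<le> R" using c0 gam by (simp add: field_simps)
      have "\<gamma>*x^2 \<le> \<gamma>*x" using x0 x1 gam by (simp add: power2_eq_square mult_left_mono mult_left_le)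
      moreover have "\<gamma>*x \<ge> 0" using gam x0 by simp
      moreover have "c*x > 0" using c0 x0 by simp
      ultimately have "c*x + \<gamma>/2*x^2 < R" using xb x0 by (simp add: algebra_simps)
      hence "g x > 0" using x0 S by (simp add: g_def)
      moreover have "g y = 0" using True S by (simp add: g_def)
      moreover have "g x \<le> g y" using opt x0 by simp
      ultimately show False by simp
    next
      case False
      hence yp: "y > 0" using y0 by simp
      have "c*y > 0" "\<gamma>*(y*y) \<ge> 0" using yp c0 gam by auto
      hence "g (y/2) > g y" using yp S by (simp add: g_def power2_eq_square field_simps)
      moreover have "g (y/2) \<le> g y" using opt yp by simp
      ultimately show False by simp
    qed
  qed
  define f where "f = (\<lambda>x. x/(S+x)*R - c*x - \<gamma>/2*x^2)"
  have fg: "g x = f x" if "x \<ge> 0" for x using that Spos by (simp add: g_def f_def)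
  have D: "(f has_real_derivative (R*S/(S+x)^2 - c - \<gamma>*x)) (at x)" if "x \<ge> 0" for x
  proof -
    have "S + x \<noteq> 0" using that Spos by simp
    then show ?thesis unfolding f_def
      apply (auto intro!: derivative_eq_intros)
      by (simp add: field_simps power2_eq_square)
  qed
  have A: "y*(\<gamma> + R/(S+y)^2) = R/(S+y) - c" if yp: "y > 0"
  proof -
    have D0: "R*S/(S+y)^2 - c - \<gamma>*y = 0"
    proof (rule DERIV_local_max[OF D[OF y0] yp])
      show "\<forall>z. \<bar>y - z\<bar> < y \<longrightarrow> f z \<le> f y"
      proof (intro allI impI)
        fix z assume "\<bar>y - z\<bar> < y"
        hence z0: "z \<ge> 0" by linarith
        have "g z \<le> g y" using opt z0 by simp
        thus "f z \<le> f y" using fg[OF z0] fg[OF y0] by simp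
      qed
    qed
    have "S + y > 0" using Spos yp by simp
    moreover have "\<And>H. H > 0 \<Longrightarrow> R*(H-y)/H^2 = R/H - y*(R/H^2)" by (simp add: field_simps power2_eq_square)
    ultimately have "R*S/(S+y)^2 = R/(S+y) - y*(R/(S+y)^2)" by (metis add_diff_cancel_right')
    with D0 show ?thesis by (simp add: distrib_left mult.commute)
  qed
  have B: "R/S \<le> c" if yz: "y = 0"
  proof (rule ccontr)
    assume "\<not> R/S \<le> c"
    hence "0 < R*S/(S+0)^2 - c - \<gamma>*0" using Spos by (simp add: power2_eq_square)
    from DERIV_pos_inc_right[OF D[of 0] this] obtain d where d: "d > 0" "\<forall>h>0. h < d \<longrightarrow> f 0 < f (0 + h)" by auto
    hence "f 0 < f (d/2)" by simp
    moreover have "g (d/2) \<le> g 0" using opt d(1) yz by simp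
    ultimately show False using fg[of 0] fg[of "d/2"] d(1) by simp
  qed
  show ?thesis using Spos A B by blast
qed

theorem proposition4p3:
  fixes N :: nat and c :: "nat \<Rightarrow> real" and R \<gamma> :: real and h :: "nat \<Rightarrow> real"
  assumes N2: "2 \<le> N"
    and cpos: "\<forall>i\<in>{1..N}. 0 < c i"
    and cmono: "\<forall>i. 1 \<le> i \<and> i < N \<longrightarrow> c i \<le> c (i + 1)"
    and Rpos: "0 < R"
    and gam: "0 \<le> \<gamma>"
    and eq: "is_equilibrium R \<gamma> c N h"
  shows "(\<forall>i. 1 \<le> i \<and> i < N \<longrightarrow> payoff R \<gamma> c N h (i + 1) \<le> payoff R \<gamma> c N h i)
       \<and> (\<forall>i. 1 \<le> i \<and> i \<le> num_active N h \<longrightarrow> 0 < payoff R \<gamma> c N h i)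
       \<and> (\<forall>i. num_active N h < i \<and> i \<le> N \<longrightarrow> payoff R \<gamma> c N h i = 0)
       \<and> (\<forall>i. 1 \<le> i \<and> i < num_active N h \<longrightarrow>
            payoff R \<gamma> c N h (i + 1) / h (i + 1) \<le> payoff R \<gamma> c N h i / h i)"
proof -
  have h0: "\<forall>i\<in>{1..N}. 0 \<le> h i" and dev: "\<forall>i\<in>{1..N}. \<forall>x::real. 0 \<le> x \<longrightarrow> payoff R \<gamma> c N (h(i := x)) i \<le> payoff R \<gamma> c N h i"
    using eq unfolding is_equilibrium_def by auto
  define H where "H = total_hash N h"
  have upd: "total_hash N (h(i:=x)) = (H - h i) + x" if i: "i \<in> {1..N}" for i x
  proof -
    have a: "total_hash N (h(i:=x)) = (h(i:=x)) i + (\<Sum>j\<in>{1..N}-{i}. (h(i:=x)) j)"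
      unfolding total_hash_def using i by (simp only: sum.remove[OF finite_atLeastAtMost i])
    have b: "(\<Sum>j\<in>{1..N}-{i}. (h(i:=x)) j) = (\<Sum>j\<in>{1..N}-{i}. h j)" by (rule sum.cong) auto
    have c: "H = h i + (\<Sum>j\<in>{1..N}-{i}. h j)" unfolding H_def total_hash_def using i by (simp add: sum.remove)
    have d: "(h(i:=x)) i = x" by simp
    show ?thesis using a b c d by linarith
  qed
  have Sge: "H - h i \<ge> 0" if i: "i \<in> {1..N}" for i
  proof -
    have "H = h i + (\<Sum>j\<in>{1..N}-{i}. h j)" unfolding H_def total_hash_def using i by (simp add: sum.remove)
    moreover have "(\<Sum>j\<in>{1..N}-{i}. h j) \<ge> 0" using h0 by (intro sum_nonneg) auto
    ultimately show ?thesis by simp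
  qed
  have key: "H - h i > 0 \<and> (h i > 0 \<longrightarrow> h i*(\<gamma> + R/((H - h i)+h i)^2) = R/((H - h i)+h i) - c i) \<and> (h i = 0 \<longrightarrow> R/(H - h i) \<le> c i)"
    if i: "i \<in> {1..N}" for i
  proof (rule br[OF Sge[OF i] _ Rpos gam])
    show "0 < c i" using cpos i by auto
    show "0 \<le> h i" using h0 i by auto
    show "\<forall>x\<ge>0. (if H - h i + x > 0 then x/(H - h i + x)*R - c i*x - \<gamma>/2*x^2 else 0)
       \<le> (if H - h i + h i > 0 then h i/(H - h i + h i)*R - c i*h i - \<gamma>/2*(h i)^2 else 0)"
    proof (intro allI impI)
      fix x :: real assume x: "0 \<le> x"
      have "payoff R \<gamma> c N (h(i := x)) i \<le> payoff R \<gamma> c N h i" using dev i x by auto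
      moreover have "payoff R \<gamma> c N (h(i := x)) i = (if H - h i + x > 0 then x/(H - h i + x)*R - c i*x - \<gamma>/2*x^2 else 0)"
        unfolding payoff_def using upd[OF i] by simp
      moreover have "payoff R \<gamma> c N h i = (if H - h i + h i > 0 then h i/(H - h i + h i)*R - c i*h i - \<gamma>/2*(h i)^2 else 0)"
        unfolding payoff_def H_def by simp
      ultimately show "(if H - h i + x > 0 then x/(H - h i + x)*R - c i*x - \<gamma>/2*x^2 else 0)
       \<le> (if H - h i + h i > 0 then h i/(H - h i + h i)*R - c i*h i - \<gamma>/2*(h i)^2 else 0)" by simp
    qed
  qed
  have one: "1 \<in> {1..N}" using N2 by simp
  have Hpos: "H > 0" using key[OF one] h0 one by force
  define K where "K = \<gamma> + R/H^2"
  define Q where "Q = \<gamma>/2 + R/H^2"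
  have RH: "R/H^2 > 0" using Rpos Hpos by simp
  have Kpos: "K > 0" using gam RH by (simp add: K_def)
  have Qpos: "Q > 0" using gam RH by (simp add: Q_def)
  have act: "h i * K = R/H - c i" if "i \<in> {1..N}" "h i > 0" for i
    using key[OF that(1)] that(2) by (simp add: K_def)
  have inact: "R/H \<le> c i" if "i \<in> {1..N}" "h i = 0" for i
    using key[OF that(1)] that(2) by simp
  have pay: "payoff R \<gamma> c N h i = Q * (h i)^2" if i: "i \<in> {1..N}" for i
  proof (cases "h i = 0")
    case True thus ?thesis unfolding payoff_def H_def[symmetric] using Hpos by simp
  next
    case False
    hence hp: "h i > 0" using h0 i by force
    have ci: "c i = R/H - h i * K" using act[OF i hp] by simp
    have "payoff R \<gamma> c N h i = h i/H*R - c i*h i - \<gamma>/2*(h i)^2"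
      unfolding payoff_def H_def[symmetric] using Hpos by simp
    also have "\<dots> = Q * (h i)^2" unfolding ci K_def Q_def using Hpos
      by (simp add: field_simps power2_eq_square)
    finally show ?thesis .
  qed
  have cchain: "c i \<le> c j" if "1 \<le> i" "i \<le> j" "j \<le> N" for i j
    using that
  proof (induction j)
    case 0 thus ?case by simp
  next
    case (Suc j)
    show ?case
    proof (cases "i = Suc j")
      case True thus ?thesis by simp
    next
      case False
      hence "i \<le> j" using Suc.prems by simp
      hence "c i \<le> c j" using Suc by simp
      moreover have "c j \<le> c (j+1)" using cmono Suc.prems \<open>i \<le> j\<close> by auto
      ultimately show ?thesis by simp
    qed
  qed
  have hmono: "h j \<le> h i" if "1 \<le> i" "i \<le> j" "j \<le> N" for i j
  proof (cases "h j > 0")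
    case False
    thus ?thesis using h0 that by force
  next
    case True
    have ij: "i \<in> {1..N}" "j \<in> {1..N}" using that by auto
    have cij: "c i \<le> c j" using cchain that by blast
    have "c j < R/H" using act[OF ij(2) True] True Kpos by (smt (verit) mult_pos_pos)
    hence hi: "h i > 0" using inact[OF ij(1)] h0 ij(1) cij by force
    have "h j * K \<le> h i * K" using act[OF ij(1) hi] act[OF ij(2) True] cij by simp
    thus ?thesis using Kpos by simp
  qed
  define A where "A = {i\<in>{1..N}. 0 < h i}"
  have nA: "num_active N h = card A" unfolding num_active_def A_def by simp
  have finA: "finite A" unfolding A_def by simp
  have actv: "h i > 0" if "1 \<le> i" "i \<le> card A" for i
  proof (rule ccontr)
    assume "\<not> h i > 0"
    have "card A \<le> N" unfolding A_def by (rule order_trans[OF card_mono[of "{1..N}"]]) auto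
    hence "h i \<le> 0" using \<open>\<not> h i > 0\<close> by simp
    have "A \<subseteq> {1..i-1}"
    proof
      fix j assume j: "j \<in> A"
      have "j < i"
      proof (rule ccontr)
        assume "\<not> j < i"
        hence "h j \<le> h i" using hmono[of i j] j that unfolding A_def by auto
        thus False using j \<open>h i \<le> 0\<close> unfolding A_def by auto
      qed
      thus "j \<in> {1..i-1}" using j unfolding A_def by auto
    qed
    hence "card A \<le> i - 1" using card_mono[of "{1..i-1}" A] by simp
    thus False using that by simp
  qed
  have inactv: "h i = 0" if "card A < i" "i \<le> N" for i
  proof (rule ccontr)
    assume "h i \<noteq> 0"
    moreover have "i \<in> {1..N}" using that by auto
    ultimately have hi: "h i > 0" using h0 by force
    have "{1..i} \<subseteq> A"
    proof
      fix j assume "j \<in> {1..i}"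
      hence "h i \<le> h j" using hmono[of j i] that by auto
      thus "j \<in> A" using hi \<open>j \<in> {1..i}\<close> that unfolding A_def by auto
    qed
    hence "card {1..i} \<le> card A" using card_mono[OF finA] by blast
    hence "i \<le> card A" by simp
    thus False using that by simp
  qed
  show ?thesis unfolding nA
  proof (intro conjI allI impI)
    fix i assume i: "1 \<le> i \<and> i < N"
    have "h (i+1) \<le> h i" using hmono[of i "i+1"] i by auto
    moreover have "0 \<le> h (i+1)" using h0 i by auto
    ultimately have "(h (i+1))^2 \<le> (h i)^2" by (simp add: power_mono)
    thus "payoff R \<gamma> c N h (i + 1) \<le> payoff R \<gamma> c N h i"
      using pay[of i] pay[of "i+1"] i Qpos by auto
  next
    fix i assume i: "1 \<le> i \<and> i \<le> card A"
    have "card A \<le> N" unfolding A_def by (rule order_trans[OF card_mono[of "{1..N}"]]) auto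
    thus "0 < payoff R \<gamma> c N h i" using pay[of i] actv[of i] i Qpos by auto
  next
    fix i assume i: "card A < i \<and> i \<le> N"
    thus "payoff R \<gamma> c N h i = 0" using pay[of i] inactv[of i] by auto
  next
    fix i assume i: "1 \<le> i \<and> i < card A"
    have cN: "card A \<le> N" unfolding A_def by (rule order_trans[OF card_mono[of "{1..N}"]]) auto
    have p1: "h (i+1) > 0" "h i > 0" using actv i by auto
    have "h (i+1) \<le> h i" using hmono[of i "i+1"] i cN by auto
    moreover have "payoff R \<gamma> c N h (i + 1) / h (i + 1) = Q * h (i+1)"
      using pay[of "i+1"] i cN p1 by (simp add: power2_eq_square)
    moreover have "payoff R \<gamma> c N h i / h i = Q * h i"
      using pay[of i] i cN p1 by (simp add: power2_eq_square)
    ultimately show "payoff R \<gamma> c N h (i + 1) / h (i + 1) \<le> payoff R \<gamma> c N h i / h i"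
      using Qpos by simp
  qed
qed

end
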